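(* In the calculus $\lambda^{RE}$ described in the context, parallel reduction is a backward simulation: if $e_1\Rrightarrow e_2$ and $e_2\to e_2'$, then there exists $e_1'$ such that $e_1\to^*e_1'$ and $e_1'\Rrightarrow e_2'$.
   Context: Syntax of $\lambda^{RE}$. Basic types $b ::= \mathsf{Bool}\mid\mathsf{Unit}$. Constants $c ::= \mathsf{true}\mid\mathsf{false}\mid\mathsf{unit}\mid (=_b)\mid (=_{(c,b)})$. Expressions $e ::= c\mid x\mid e\ e\mid \lambda x{:}\tau.\,e\mid \mathsf{BEq}_b\ e\ e\ e\mid \mathsf{XEq}_{x:\tau\to\tau}\ e\ e\ e$. Values $v ::= c\mid \lambda x{:}\tau.\,e\mid \mathsf{BEq}_b\ e\ e\ v\mid \mathsf{XEq}_{x:\tau\to\tau}\ e\ e\ v$. Types $\tau ::= \{x{:}b\mid e\}\mid x{:}\tau\to\tau\mid \mathsf{PEq}_{\tau}\{e\}\{e\}$. $e[x:=e']$ is capture-avoiding substitution. Reduction: evaluation contexts $E ::= \bullet\mid E\ e\mid v\ E\mid \mathsf{BEq}_b\ e\ e\ E\mid\mathsf{XEq}_{x:\tau\to\tau}\ e\ e\ E$; $E[e]\to E[e']$ if $e\to e'$; $(\lambda x{:}\tau.\,e)\ v\to e[x:=v]$; $(=_b)\ c_1\to(=_{(c_1,b)})$; $(=_{(c_1,b)})\ c_2\to\mathsf{true}$ if $c_1,c_2$ syntactically equal, else $\to\mathsf{false}$. $\to^*$ is the reflexive–transitive closure. Parallel reduction $e\Rrightarrow e'$ and $\tau\Rrightarrow\tau'$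 is defined inductively: $x\Rrightarrow x$; $c\Rrightarrow c$; $\lambda x{:}\tau.e\Rrightarrow\lambda x{:}\tau'.e'$ if $\tau\Rrightarrow\tau'$, $e\Rrightarrow e'$; $e_1\ e_2\Rrightarrow e_1'\ e_2'$ if $e_i\Rrightarrow e_i'$; $(\lambda x{:}\tau.e)\ v\Rrightarrow e'[x:=v']$ if $e\Rrightarrow e'$ and $v\Rrightarrow v'$; $(=_b)\ c_1\Rrightarrow(=_{(c_1,b)})$; $(=_{(c_1,b)})\ c_2\Rrightarrow d$ where $d=\mathsf{true}$ if $c_1,c_2$ are syntactically equal and $\mathsf{false}$ otherwise; $\mathsf{BEq}_b\ e_l\ e_r\ e\Rrightarrow\mathsf{BEq}_b\ e_l'\ e_r'\ e'$ if $e_l\Rrightarrow e_l'$, $e_r\Rrightarrow e_r'$, $e\Rrightarrow e'$; $\mathsf{XEq}_{x:\tau_x\to\tau}\ e_l\ e_r\ e\Rrightarrow\mathsf{XEq}_{x:\tau_x'\to\tau'}\ e_l'\ e_r'\ e'$ if all five components parallel reduce; on types: $\{x{:}b\mid r\}\Rrightarrow\{x{:}b\mid r'\}$ if $r\Rrightarrow r'$; $x{:}\tau_x\to\tau\Rrightarrow x{:}\tau_x'\to\tau'$ if $\tau_x\Rrightarrow\tau_x'$, $\tau\Rrightarrow\tau'$; $\mathsf{PEq}_\tau\{e_l\}\{e_r\}\Rrightarrow\mathsf{PEq}_{\tau'}\{e_l'\}\{e_r'\}$ if all components parallel reduce. *)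

theory Defs
  imports Main
begin

text \<open>Binders: Lam T e binds in e; TRef b e binds in e; TArr Tx T binds in T;
  XEq Tx T el er e binds in T only (the codomain of the annotation x:Tx -> T).\<close>

datatype bty = BBool | BUnit

datatype const = CTrue | CFalse | CUnit | CEq bty | CEq2 const bty

datatype expr =
    Const const
  | Var nat
  | App expr expr
  | Lam ty expr
  | BEq bty expr expr expr
  | XEq ty ty expr expr expr
and ty =
    TRef bty expr
  | TArr ty ty
  | TPEq ty expr expr

primrec lift_e :: "nat \<Rightarrow> expr \<Rightarrow> expr"
  and lift_t :: "nat \<Rightarrow> ty \<Rightarrow> ty" where
  "lift_e k (Const c) = Const c"
| "lift_e k (Var i) = (if i < k then Var i else Var (Suc i))"
| "lift_e k (App e1 e2) = App (lift_e k e1) (lift_e k e2)"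
| "lift_e k (Lam T e) = Lam (lift_t k T) (lift_e (Suc k) e)"
| "lift_e k (BEq b el er e) = BEq b (lift_e k el) (lift_e k er) (lift_e k e)"
| "lift_e k (XEq Tx T el er e) =
     XEq (lift_t k Tx) (lift_t (Suc k) T) (lift_e k el) (lift_e k er) (lift_e k e)"
| "lift_t k (TRef b r) = TRef b (lift_e (Suc k) r)"
| "lift_t k (TArr Tx T) = TArr (lift_t k Tx) (lift_t (Suc k) T)"
| "lift_t k (TPEq T el er) = TPEq (lift_t k T) (lift_e k el) (lift_e k er)"

primrec subst_e :: "nat \<Rightarrow> expr \<Rightarrow> expr \<Rightarrow> expr"
  and subst_t :: "nat \<Rightarrow> expr \<Rightarrow> ty \<Rightarrow> ty" where
  "subst_e k s (Const c) = Const c"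
| "subst_e k s (Var i) = (if i < k then Var i else if i = k then s else Var (i - 1))"
| "subst_e k s (App e1 e2) = App (subst_e k s e1) (subst_e k s e2)"
| "subst_e k s (Lam T e) = Lam (subst_t k s T) (subst_e (Suc k) (lift_e 0 s) e)"
| "subst_e k s (BEq b el er e) = BEq b (subst_e k s el) (subst_e k s er) (subst_e k s e)"
| "subst_e k s (XEq Tx T el er e) =
     XEq (subst_t k s Tx) (subst_t (Suc k) (lift_e 0 s) T)
         (subst_e k s el) (subst_e k s er) (subst_e k s e)"
| "subst_t k s (TRef b r) = TRef b (subst_e (Suc k) (lift_e 0 s) r)"
| "subst_t k s (TArr Tx T) = TArr (subst_t k s Tx) (subst_t (Suc k) (lift_e 0 s) T)"
| "subst_t k s (TPEq T el er) = TPEq (subst_t k s T) (subst_e k s el) (subst_e k s er)"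

definition inst :: "expr \<Rightarrow> expr \<Rightarrow> expr" where
  "inst e v = subst_e 0 v e"

fun is_val :: "expr \<Rightarrow> bool" where
  "is_val (Const c) = True"
| "is_val (Lam T e) = True"
| "is_val (BEq b el er v) = is_val v"
| "is_val (XEq Tx T el er v) = is_val v"
| "is_val _ = False"

definition eq_result :: "const \<Rightarrow> const \<Rightarrow> expr" where
  "eq_result c1 c2 = (if c1 = c2 then Const CTrue else Const CFalse)"

text \<open>Small-step reduction (evaluation contexts unfolded).\<close>
inductive step :: "expr \<Rightarrow> expr \<Rightarrow> bool" (infix "\<longmapsto>" 50) where
  s_app1: "e1 \<longmapsto> e1' \<Longrightarrow> App e1 e2 \<longmapsto> App e1' e2"
| s_app2: "is_val v \<Longrightarrow> e \<longmapsto> e' \<Longrightarrow> App v e \<longmapsto> App v e'"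
| s_beq: "e \<longmapsto> e' \<Longrightarrow> BEq b el er e \<longmapsto> BEq b el er e'"
| s_xeq: "e \<longmapsto> e' \<Longrightarrow> XEq Tx T el er e \<longmapsto> XEq Tx T el er e'"
| s_beta: "is_val v \<Longrightarrow> App (Lam T e) v \<longmapsto> inst e v"
| s_eq1: "App (Const (CEq b)) (Const c1) \<longmapsto> Const (CEq2 c1 b)"
| s_eq2: "App (Const (CEq2 c1 b)) (Const c2) \<longmapsto> eq_result c1 c2"

inductive par_e :: "expr \<Rightarrow> expr \<Rightarrow> bool" (infix "\<Rrightarrow>" 50)
  and par_t :: "ty \<Rightarrow> ty \<Rightarrow> bool" (infix "\<Rrightarrow>\<^sub>t" 50) where
  p_var: "Var x \<Rrightarrow> Var x"
| p_const: "Const c \<Rrightarrow> Const c"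
| p_lam: "T \<Rrightarrow>\<^sub>t T' \<Longrightarrow> e \<Rrightarrow> e' \<Longrightarrow> Lam T e \<Rrightarrow> Lam T' e'"
| p_app: "e1 \<Rrightarrow> e1' \<Longrightarrow> e2 \<Rrightarrow> e2' \<Longrightarrow> App e1 e2 \<Rrightarrow> App e1' e2'"
| p_beta: "e \<Rrightarrow> e' \<Longrightarrow> is_val v \<Longrightarrow> v \<Rrightarrow> v' \<Longrightarrow> App (Lam T e) v \<Rrightarrow> inst e' v'"
| p_eq1: "App (Const (CEq b)) (Const c1) \<Rrightarrow> Const (CEq2 c1 b)"
| p_eq2: "App (Const (CEq2 c1 b)) (Const c2) \<Rrightarrow> eq_result c1 c2"
| p_beq: "el \<Rrightarrow> el' \<Longrightarrow> er \<Rrightarrow> er' \<Longrightarrow> e \<Rrightarrow> e' \<Longrightarrow> BEq b el er e \<Rrightarrow> BEq b el' er' e'"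
| p_xeq: "Tx \<Rrightarrow>\<^sub>t Tx' \<Longrightarrow> T \<Rrightarrow>\<^sub>t T' \<Longrightarrow> el \<Rrightarrow> el' \<Longrightarrow> er \<Rrightarrow> er' \<Longrightarrow> e \<Rrightarrow> e'
          \<Longrightarrow> XEq Tx T el er e \<Rrightarrow> XEq Tx' T' el' er' e'"
| p_tref: "r \<Rrightarrow> r' \<Longrightarrow> TRef b r \<Rrightarrow>\<^sub>t TRef b r'"
| p_tarr: "Tx \<Rrightarrow>\<^sub>t Tx' \<Longrightarrow> T \<Rrightarrow>\<^sub>t T' \<Longrightarrow> TArr Tx T \<Rrightarrow>\<^sub>t TArr Tx' T'"
| p_tpeq: "T \<Rrightarrow>\<^sub>t T' \<Longrightarrow> el \<Rrightarrow> el' \<Longrightarrow> er \<Rrightarrow> er' \<Longrightarrow> TPEq T el er \<Rrightarrow>\<^sub>t TPEq T' el' er'"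

end

theory Submission
  imports Defs
begin

lemma lift_lift:
  "i \<le> k \<Longrightarrow> lift_e (Suc k) (lift_e i t) = lift_e i (lift_e k t)"
  "i \<le> k \<Longrightarrow> lift_t (Suc k) (lift_t i T) = lift_t i (lift_t k T)"
  by (induct t and T arbitrary: i k and i k) auto

lemma lift_subst:
  "j \<le> i \<Longrightarrow> lift_e i (subst_e j s t) = subst_e j (lift_e i s) (lift_e (Suc i) t)"
  "j \<le> i \<Longrightarrow> lift_t i (subst_t j s T) = subst_t j (lift_e i s) (lift_t (Suc i) T)"
  by (induct t and T arbitrary: i j s and i j s) (auto simp add: lift_lift)

lemma lift_subst_lt:
  "i \<le> j \<Longrightarrow> lift_e i (subst_e j s t) = subst_e (Suc j) (lift_e i s) (lift_e i t)"
  "i \<le> j \<Longrightarrow> lift_t i (subst_t j s T) = subst_t (Suc j) (lift_e i s) (lift_t i T)"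
  by (induct t and T arbitrary: i j s and i j s) (auto simp add: lift_lift)

lemma subst_lift [simp]:
  "subst_e k s (lift_e k t) = t"
  "subst_t k s (lift_t k T) = T"
  by (induct t and T arbitrary: k s and k s) simp_all

lemma subst_subst:
  "i \<le> j \<Longrightarrow> subst_e i (subst_e j v u) (subst_e (Suc j) (lift_e i v) t) = subst_e j v (subst_e i u t)"
  "i \<le> j \<Longrightarrow> subst_t i (subst_e j v u) (subst_t (Suc j) (lift_e i v) T) = subst_t j v (subst_t i u T)"
  by (induct t and T arbitrary: i j u v and i j u v)
    (auto simp add: lift_lift [symmetric] lift_subst_lt)

lemma is_val_lift [simp]: "is_val (lift_e k e) = is_val e"
  by (induct e arbitrary: k) auto

lemma is_val_subst: "is_val e \<Longrightarrow> is_val (subst_e k s e)"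
  by (induct e arbitrary: k s) auto

lemma eq_result_ls [simp]:
  "lift_e k (eq_result c1 c2) = eq_result c1 c2"
  "subst_e k s (eq_result c1 c2) = eq_result c1 c2"
  by (auto simp: eq_result_def)

lemma par_refl: "e \<Rrightarrow> e" "T \<Rrightarrow>\<^sub>t T"
  by (induct e and T) (auto intro: par_e_par_t.intros)

lemma par_lift:
  "e \<Rrightarrow> e' \<Longrightarrow> (\<And>k. lift_e k e \<Rrightarrow> lift_e k e')"
  "T \<Rrightarrow>\<^sub>t T' \<Longrightarrow> (\<And>k. lift_t k T \<Rrightarrow>\<^sub>t lift_t k T')"
proof (induct rule: par_e_par_t.inducts)
  case (p_beta e e' v v' T)
  have "lift_e k (inst e' v') = inst (lift_e (Suc k) e') (lift_e k v')"
    unfolding inst_def by (simp add: lift_subst)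
  then show ?case using p_beta by (auto intro: par_e_par_t.intros)
next
  case (p_eq2 c1 b c2)
  then show ?case by (simp add: par_e_par_t.p_eq2)
qed (auto intro: par_e_par_t.intros)

lemma par_lift0: "s \<Rrightarrow> s' \<Longrightarrow> lift_e k s \<Rrightarrow> lift_e k s'"
  by (rule par_lift(1))

lemma par_subst:
  "e \<Rrightarrow> e' \<Longrightarrow> (\<And>k s s'. s \<Rrightarrow> s' \<Longrightarrow> subst_e k s e \<Rrightarrow> subst_e k s' e')"
  "T \<Rrightarrow>\<^sub>t T' \<Longrightarrow> (\<And>k s s'. s \<Rrightarrow> s' \<Longrightarrow> subst_t k s T \<Rrightarrow>\<^sub>t subst_t k s' T')"
proof (induct rule: par_e_par_t.inducts)
  case (p_beta e e' v v' T)
  have "subst_e k s' (inst e' v') = inst (subst_e (Suc k) (lift_e 0 s') e') (subst_e k s' v')"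
    unfolding inst_def by (simp add: subst_subst(1)[symmetric])
  moreover have "lift_e 0 s \<Rrightarrow> lift_e 0 s'" using p_beta par_lift by blast
  ultimately show ?case using p_beta
    by (simp add: is_val_subst par_e_par_t.p_beta)
next
  case (p_eq2 c1 b c2)
  then show ?case by (simp add: par_e_par_t.p_eq2)
qed (auto intro!: par_e_par_t.intros simp: par_lift0)

lemma par_val: "v \<Rrightarrow> v' \<Longrightarrow> is_val v \<Longrightarrow> is_val v'" "T \<Rrightarrow>\<^sub>t T' \<Longrightarrow> True"
  by (induct rule: par_e_par_t.inducts) auto

lemma val_nostep: "v \<longmapsto> e \<Longrightarrow> \<not> is_val v"
  by (induct rule: step.induct) auto

lemma par_var_inv: "Var i \<Rrightarrow> e \<Longrightarrow> e = Var i"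
  by (cases rule: par_e.cases) auto

lemma val_par_lam: "w \<Rrightarrow> Lam T0 e0 \<Longrightarrow> is_val w \<Longrightarrow> \<exists>T1 e1. w = Lam T1 e1 \<and> e1 \<Rrightarrow> e0"
  by (cases rule: par_e.cases) (auto simp: inst_def)

lemma val_par_const: "w \<Rrightarrow> Const c \<Longrightarrow> is_val w \<Longrightarrow> w = Const c"
  by (cases rule: par_e.cases) auto

primrec substs :: "expr \<Rightarrow> (nat \<times> expr) list \<Rightarrow> expr" where
  "substs e [] = e"
| "substs e (p # ps) = substs (subst_e (fst p) (snd p) e) ps"

primrec substs_t :: "ty \<Rightarrow> (nat \<times> expr) list \<Rightarrow> ty" where
  "substs_t T [] = T"
| "substs_t T (p # ps) = substs_t (subst_t (fst p) (snd p) T) ps"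

definition liftS :: "(nat \<times> expr) list \<Rightarrow> (nat \<times> expr) list" where
  "liftS ps = map (\<lambda>p. (Suc (fst p), lift_e 0 (snd p))) ps"

lemma liftS_simps [simp]: "liftS [] = []" "liftS (p # ps) = (Suc (fst p), lift_e 0 (snd p)) # liftS ps"
  by (auto simp: liftS_def)

lemma substs_simps [simp]:
  "substs (Const c) ps = Const c"
  "substs (App a b) ps = App (substs a ps) (substs b ps)"
  "substs (Lam T b) ps = Lam (substs_t T ps) (substs b (liftS ps))"
  "substs (BEq bt el er e) ps = BEq bt (substs el ps) (substs er ps) (substs e ps)"
  "substs (XEq Tx T el er e) ps = XEq (substs_t Tx ps) (substs_t T (liftS ps)) (substs el ps) (substs er ps) (substs e ps)"
  by (induct ps arbitrary: a b T el er e Tx) auto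

lemma substs_eq_result [simp]: "substs (eq_result c1 c2) ps = eq_result c1 c2"
  by (induct ps) auto

lemma substs_append [simp]: "substs e (ps @ qs) = substs (substs e ps) qs"
  by (induct ps arbitrary: e) auto

lemma substs_inst: "substs (inst b u) ps = inst (substs b (liftS ps)) (substs u ps)"
  unfolding inst_def
  by (induct ps arbitrary: b u) (auto simp: subst_subst(1)[symmetric])

lemma inst_substs: "inst (substs b ps) u = substs b (ps @ [(0, u)])"
  by (simp add: inst_def)

definition allval :: "(nat \<times> expr) list \<Rightarrow> bool" where
  "allval ps = (\<forall>p\<in>set ps. is_val (snd p))"

definition rel :: "(nat \<times> expr) list \<Rightarrow> (nat \<times> expr) list \<Rightarrow> bool" where
  "rel ps qs = list_all2 (\<lambda>p q. fst p = fst q \<and> snd p \<Rrightarrow> snd q) ps qs"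

lemma substs_val: "allval ps \<Longrightarrow> is_val e \<Longrightarrow> is_val (substs e ps)"
  by (induct ps arbitrary: e) (auto simp: allval_def is_val_subst)

lemma allval_liftS: "allval ps \<Longrightarrow> allval (liftS ps)"
  by (auto simp: allval_def liftS_def)

lemma substs_var: "allval ps \<Longrightarrow> (\<exists>j. substs (Var i) ps = Var j) \<or> is_val (substs (Var i) ps)"
proof (induct ps arbitrary: i)
  case (Cons p ps)
  then show ?case
    by (cases "i < fst p"; cases "i = fst p") (auto simp: allval_def substs_val)
qed auto

lemma rel_liftS: "rel ps qs \<Longrightarrow> rel (liftS ps) (liftS qs)"
  unfolding rel_def liftS_def list_all2_map1 list_all2_map2
  by (auto elim: list_all2_mono intro: par_lift)

lemma par_substs:
  "rel ps qs \<Longrightarrow> e \<Rrightarrow> e' \<Longrightarrow> substs e ps \<Rrightarrow> substs e' qs"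
  "rel ps qs \<Longrightarrow> T \<Rrightarrow>\<^sub>t T' \<Longrightarrow> substs_t T ps \<Rrightarrow>\<^sub>t substs_t T' qs"
  unfolding rel_def
  subgoal by (induct ps qs arbitrary: e e' rule: list_all2_induct) (auto intro: par_subst)
  subgoal by (induct ps qs arbitrary: T T' rule: list_all2_induct) (auto intro: par_subst)
  done

lemma rel_snoc: "rel ps qs \<Longrightarrow> u \<Rrightarrow> u' \<Longrightarrow> rel (ps @ [(k, u)]) (qs @ [(k, u')])"
  unfolding rel_def by (auto intro: list_all2_appendI)

lemma allval_snoc: "allval ps \<Longrightarrow> is_val u \<Longrightarrow> allval (ps @ [(k, u)])"
  unfolding allval_def by auto

lemma steps_app1: "step\<^sup>*\<^sup>* a a' \<Longrightarrow> step\<^sup>*\<^sup>* (App a b) (App a' b)"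
  by (induct rule: rtranclp_induct) (auto intro: rtranclp.rtrancl_into_rtrancl step.intros)

lemma steps_app2: "step\<^sup>*\<^sup>* b b' \<Longrightarrow> is_val a \<Longrightarrow> step\<^sup>*\<^sup>* (App a b) (App a b')"
  by (induct rule: rtranclp_induct) (auto intro: rtranclp.rtrancl_into_rtrancl step.intros)

lemma steps_beq: "step\<^sup>*\<^sup>* e e' \<Longrightarrow> step\<^sup>*\<^sup>* (BEq b el er e) (BEq b el er e')"
  by (induct rule: rtranclp_induct) (auto intro: rtranclp.rtrancl_into_rtrancl step.intros)

lemma steps_xeq: "step\<^sup>*\<^sup>* e e' \<Longrightarrow> step\<^sup>*\<^sup>* (XEq Tx T el er e) (XEq Tx T el er e')"
  by (induct rule: rtranclp_induct) (auto intro: rtranclp.rtrancl_into_rtrancl step.intros)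

lemma is_val_eq_result [simp]: "is_val (eq_result c1 c2)"
  by (simp add: eq_result_def)

lemma beta_setup:
  assumes "rel ps qs" "allval ps" "is_val v" "v \<Rrightarrow> v'"
  shows "rel (liftS ps @ [(0, substs v ps)]) (liftS qs @ [(0, substs v' qs)])"
    and "allval (liftS ps @ [(0, substs v ps)])"
    and "substs (App (Lam T e) v) ps \<longmapsto> substs e (liftS ps @ [(0, substs v ps)])"
    and "substs (inst e' v') qs = substs e' (liftS qs @ [(0, substs v' qs)])"
proof -
  show "rel (liftS ps @ [(0, substs v ps)]) (liftS qs @ [(0, substs v' qs)])"
    using assms by (intro rel_snoc rel_liftS par_substs) auto
  show "allval (liftS ps @ [(0, substs v ps)])"
    using assms by (intro allval_snoc allval_liftS substs_val) auto
  have "is_val (substs v ps)" using assms substs_val by auto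
  then have "substs (App (Lam T e) v) ps \<longmapsto> inst (substs e (liftS ps)) (substs v ps)"
    by (simp add: step.s_beta)
  then show "substs (App (Lam T e) v) ps \<longmapsto> substs e (liftS ps @ [(0, substs v ps)])"
    by (simp add: inst_substs)
  show "substs (inst e' v') qs = substs e' (liftS qs @ [(0, substs v' qs)])"
    by (simp add: substs_inst inst_substs)
qed

lemma L:
  "a \<Rrightarrow> a' \<Longrightarrow> (\<And>ps qs. rel ps qs \<Longrightarrow> allval ps \<Longrightarrow> is_val (substs a' qs) \<Longrightarrow>
      \<exists>w. step\<^sup>*\<^sup>* (substs a ps) w \<and> is_val w \<and> w \<Rrightarrow> substs a' qs)"
  "T \<Rrightarrow>\<^sub>t T' \<Longrightarrow> True"
proof (induct rule: par_e_par_t.inducts)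
  case (p_var x)
  have pr: "substs (Var x) ps \<Rrightarrow> substs (Var x) qs"
    using p_var par_substs par_refl by blast
  from substs_var[OF p_var(2), of x] show ?case
  proof
    assume "\<exists>j. substs (Var x) ps = Var j"
    then obtain j where j: "substs (Var x) ps = Var j" by blast
    then have "substs (Var x) qs = Var j" using pr par_var_inv by metis
    then show ?thesis using p_var(3) by simp
  next
    assume "is_val (substs (Var x) ps)"
    then show ?thesis using pr by blast
  qed
next
  case (p_const c)
  then show ?case using par_refl by auto
next
  case (p_lam T T' e e')
  have "substs (Lam T e) ps \<Rrightarrow> substs (Lam T' e') qs"
    using p_lam par_substs par_e_par_t.p_lam by blast
  then show ?case by (intro exI[of _ "substs (Lam T e) ps"]) auto
next
  case (p_app e1 e1' e2 e2')
  then show ?case by simp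
next
  case (p_beta e e' v v' T)
  note bs = beta_setup[OF p_beta(6,7,3,4)]
  obtain w where w: "step\<^sup>*\<^sup>* (substs e (liftS ps @ [(0, substs v ps)])) w" "is_val w"
    "w \<Rrightarrow> substs (inst e' v') qs"
    using p_beta(2)[OF bs(1,2)] p_beta(8) bs(4)[of e'] by auto
  then show ?case using bs(3)[of T e] by (meson converse_rtranclp_into_rtranclp)
next
  case (p_eq1 b c1)
  have "substs (App (Const (CEq b)) (Const c1)) ps \<longmapsto> Const (CEq2 c1 b)"
    by (simp add: step.s_eq1)
  then show ?case using par_refl by (auto intro!: exI[of _ "Const (CEq2 c1 b)"])
next
  case (p_eq2 c1 b c2)
  have "substs (App (Const (CEq2 c1 b)) (Const c2)) ps \<longmapsto> eq_result c1 c2"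
    by (simp add: step.s_eq2)
  then show ?case using par_refl by (auto intro!: exI[of _ "eq_result c1 c2"])
next
  case (p_beq el el' er er' e e' b)
  obtain w where w: "step\<^sup>*\<^sup>* (substs e ps) w" "is_val w" "w \<Rrightarrow> substs e' qs"
    using p_beq(6)[OF p_beq(7,8)] p_beq(9) by auto
  have "BEq b (substs el ps) (substs er ps) w \<Rrightarrow> substs (BEq b el' er' e') qs"
    using p_beq w par_substs by (auto intro!: par_e_par_t.p_beq)
  then show ?case using w steps_beq by fastforce
next
  case (p_xeq Tx Tx' T T' el el' er er' e e')
  obtain w where w: "step\<^sup>*\<^sup>* (substs e ps) w" "is_val w" "w \<Rrightarrow> substs e' qs"
    using p_xeq(10)[OF p_xeq(11,12)] p_xeq(13) by auto
  have "XEq (substs_t Tx ps) (substs_t T (liftS ps)) (substs el ps) (substs er ps) w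
      \<Rrightarrow> substs (XEq Tx' T' el' er' e') qs"
    using p_xeq w par_substs rel_liftS by (auto intro!: par_e_par_t.p_xeq)
  then show ?case using w steps_xeq by fastforce
qed auto

lemma app_step_inv: "App x y \<longmapsto> z \<Longrightarrow>
   (\<exists>x'. x \<longmapsto> x' \<and> z = App x' y) \<or> (is_val x \<and> (\<exists>y'. y \<longmapsto> y' \<and> z = App x y'))
 \<or> (\<exists>T e. x = Lam T e \<and> is_val y \<and> z = inst e y)
 \<or> (\<exists>b c1. x = Const (CEq b) \<and> y = Const c1 \<and> z = Const (CEq2 c1 b))
 \<or> (\<exists>c1 b c2. x = Const (CEq2 c1 b) \<and> y = Const c2 \<and> z = eq_result c1 c2)"
  by (cases rule: step.cases) auto

lemma beq_step_inv: "BEq b el er e \<longmapsto> z \<Longrightarrow> \<exists>e''. e \<longmapsto> e'' \<and> z = BEq b el er e''"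
  by (cases rule: step.cases) auto

lemma xeq_step_inv: "XEq Tx T el er e \<longmapsto> z \<Longrightarrow> \<exists>e''. e \<longmapsto> e'' \<and> z = XEq Tx T el er e''"
  by (cases rule: step.cases) auto

lemma var_nostep: "Var i \<longmapsto> z \<Longrightarrow> False"
  by (cases rule: step.cases) auto

lemma M:
  "a \<Rrightarrow> a' \<Longrightarrow> (\<And>ps qs e2'. rel ps qs \<Longrightarrow> allval ps \<Longrightarrow> allval qs \<Longrightarrow> substs a' qs \<longmapsto> e2' \<Longrightarrow>
      \<exists>w. step\<^sup>*\<^sup>* (substs a ps) w \<and> w \<Rrightarrow> e2')"
  "T \<Rrightarrow>\<^sub>t T' \<Longrightarrow> True"
proof (induct rule: par_e_par_t.inducts)
  case (p_var x)
  from substs_var[OF p_var(3), of x] show ?case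
    using p_var(4) var_nostep val_nostep by metis
next
  case (p_const c)
  then show ?case using val_nostep by (metis is_val.simps(1) substs_simps(1))
next
  case (p_lam T T' e e')
  then show ?case using val_nostep by (metis is_val.simps(2) substs_simps(3))
next
  case (p_eq1 b c1)
  then show ?case using val_nostep by (metis is_val.simps(1) substs_simps(1))
next
  case (p_eq2 c1 b c2)
  then show ?case using val_nostep by (metis is_val_eq_result substs_eq_result)
next
  case (p_beta e e' v v' T)
  note bs = beta_setup[OF p_beta(6,7,3,4)]
  have vv: "is_val v'" using par_val(1) p_beta(3,4) by blast
  have "allval (liftS qs @ [(0, substs v' qs)])"
    using p_beta(8) vv by (intro allval_snoc allval_liftS substs_val) auto
  then obtain w where w: "step\<^sup>*\<^sup>* (substs e (liftS ps @ [(0, substs v ps)])) w" "w \<Rrightarrow> e2'"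
    using p_beta(2)[OF bs(1,2)] p_beta(9) bs(4)[of e'] by auto
  then show ?case using bs(3)[of T e] by (meson converse_rtranclp_into_rtranclp)
next
  case (p_beq el el' er er' e e' b)
  from beq_step_inv[OF p_beq(10)[simplified]] obtain y where y: "substs e' qs \<longmapsto> y"
    "e2' = BEq b (substs el' qs) (substs er' qs) y"
    by auto
  obtain w where w: "step\<^sup>*\<^sup>* (substs e ps) w" "w \<Rrightarrow> y"
    using p_beq(6)[OF p_beq(7,8,9) y(1)] by auto
  have "BEq b (substs el ps) (substs er ps) w \<Rrightarrow> e2'"
    using p_beq w y par_substs by (auto intro!: par_e_par_t.p_beq)
  then show ?case using w steps_beq by fastforce
next
  case (p_xeq Tx Tx' T T' el el' er er' e e')
  from xeq_step_inv[OF p_xeq(14)[simplified]] obtain y where y: "substs e' qs \<longmapsto> y"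
    "e2' = XEq (substs_t Tx' qs) (substs_t T' (liftS qs)) (substs el' qs) (substs er' qs) y"
    by auto
  obtain w where w: "step\<^sup>*\<^sup>* (substs e ps) w" "w \<Rrightarrow> y"
    using p_xeq(10)[OF p_xeq(11,12,13) y(1)] by auto
  have "XEq (substs_t Tx ps) (substs_t T (liftS ps)) (substs el ps) (substs er ps) w \<Rrightarrow> e2'"
    using p_xeq w y par_substs rel_liftS by (auto intro!: par_e_par_t.p_xeq)
  then show ?case using w steps_xeq by fastforce
next
  case (p_app c c' d d')
  have rc: "substs c ps \<Rrightarrow> substs c' qs" and rd: "substs d ps \<Rrightarrow> substs d' qs"
    using p_app par_substs by auto
  from app_step_inv[OF p_app(8)[simplified]] show ?case
  proof (elim disjE exE conjE)
    fix x' assume x': "substs c' qs \<longmapsto> x'" "e2' = App x' (substs d' qs)"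
    obtain w where "step\<^sup>*\<^sup>* (substs c ps) w" "w \<Rrightarrow> x'"
      using p_app(2)[OF p_app(5,6,7) x'(1)] by auto
    then show ?thesis using x' rd steps_app1 by (auto intro!: par_e_par_t.p_app)
  next
    fix y' assume vc: "is_val (substs c' qs)" and y': "substs d' qs \<longmapsto> y'"
      "e2' = App (substs c' qs) y'"
    obtain w1 where w1: "step\<^sup>*\<^sup>* (substs c ps) w1" "is_val w1" "w1 \<Rrightarrow> substs c' qs"
      using L(1)[OF p_app(1) p_app(5,6) vc] by auto
    obtain w2 where w2: "step\<^sup>*\<^sup>* (substs d ps) w2" "w2 \<Rrightarrow> y'"
      using p_app(4)[OF p_app(5,6,7) y'(1)] by auto
    have "step\<^sup>*\<^sup>* (App (substs c ps) (substs d ps)) (App w1 w2)"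
      using steps_app1[OF w1(1)] steps_app2[OF w2(1) w1(2)] by (meson rtranclp_trans)
    then show ?thesis using w1 w2 y' by (auto intro!: par_e_par_t.p_app)
  next
    fix T e assume lam: "substs c' qs = Lam T e" and vd: "is_val (substs d' qs)"
      and e2: "e2' = inst e (substs d' qs)"
    obtain w1 where w1: "step\<^sup>*\<^sup>* (substs c ps) w1" "is_val w1" "w1 \<Rrightarrow> Lam T e"
      using L(1)[OF p_app(1) p_app(5,6)] lam by fastforce
    obtain T1 e1 where l1: "w1 = Lam T1 e1" "e1 \<Rrightarrow> e"
      using val_par_lam[OF w1(3) w1(2)] by auto
    obtain w2 where w2: "step\<^sup>*\<^sup>* (substs d ps) w2" "is_val w2" "w2 \<Rrightarrow> substs d' qs"
      using L(1)[OF p_app(3) p_app(5,6) vd] by auto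
    have "step\<^sup>*\<^sup>* (App (substs c ps) (substs d ps)) (App w1 w2)"
      using steps_app1[OF w1(1)] steps_app2[OF w2(1) w1(2)] by (meson rtranclp_trans)
    moreover have "App w1 w2 \<longmapsto> inst e1 w2" using l1 w2(2) by (simp add: step.s_beta)
    moreover have "inst e1 w2 \<Rrightarrow> e2'" unfolding e2 inst_def
      using par_subst(1)[OF l1(2) w2(3)] .
    ultimately show ?thesis by (auto intro: rtranclp.rtrancl_into_rtrancl)
  next
    fix b c1 assume h: "substs c' qs = Const (CEq b)" "substs d' qs = Const c1"
      "e2' = Const (CEq2 c1 b)"
    obtain w1 where w1: "step\<^sup>*\<^sup>* (substs c ps) w1" "is_val w1" "w1 \<Rrightarrow> Const (CEq b)"
      using L(1)[OF p_app(1) p_app(5,6)] h by fastforce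
    obtain w2 where w2: "step\<^sup>*\<^sup>* (substs d ps) w2" "is_val w2" "w2 \<Rrightarrow> Const c1"
      using L(1)[OF p_app(3) p_app(5,6)] h by fastforce
    have "w1 = Const (CEq b)" "w2 = Const c1" using w1 w2 val_par_const by auto
    then have "step\<^sup>*\<^sup>* (App (substs c ps) (substs d ps)) (App w1 w2)"
      "App w1 w2 \<longmapsto> e2'"
      using steps_app1[OF w1(1)] steps_app2[OF w2(1) w1(2)] h by (auto intro: step.s_eq1 rtranclp_trans)
    then show ?thesis using par_refl by (auto intro: rtranclp.rtrancl_into_rtrancl)
  next
    fix c1 b c2 assume h: "substs c' qs = Const (CEq2 c1 b)" "substs d' qs = Const c2"
      "e2' = eq_result c1 c2"
    obtain w1 where w1: "step\<^sup>*\<^sup>* (substs c ps) w1" "is_val w1" "w1 \<Rrightarrow> Const (CEq2 c1 b)"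
      using L(1)[OF p_app(1) p_app(5,6)] h by fastforce
    obtain w2 where w2: "step\<^sup>*\<^sup>* (substs d ps) w2" "is_val w2" "w2 \<Rrightarrow> Const c2"
      using L(1)[OF p_app(3) p_app(5,6)] h by fastforce
    have "w1 = Const (CEq2 c1 b)" "w2 = Const c2" using w1 w2 val_par_const by auto
    then have "step\<^sup>*\<^sup>* (App (substs c ps) (substs d ps)) (App w1 w2)"
      "App w1 w2 \<longmapsto> e2'"
      using steps_app1[OF w1(1)] steps_app2[OF w2(1) w1(2)] h by (auto intro: step.s_eq2 rtranclp_trans)
    then show ?thesis using par_refl by (auto intro: rtranclp.rtrancl_into_rtrancl)
  qed
qed auto

theorem corollaryC15:
  assumes "e1 \<Rrightarrow> e2" and "e2 \<longmapsto> e2'"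
  shows "\<exists>e1'. step\<^sup>*\<^sup>* e1 e1' \<and> e1' \<Rrightarrow> e2'"
  using M(1)[OF assms(1), of "[]" "[]" e2'] assms(2) by (simp add: rel_def allval_def)

end
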